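(* Let $B>0$ and let $(\alpha_d)_{d\ge3}$, $(\beta_d)_{d\ge3}$ be real sequences such that $\{\alpha_d\varphi(d):d\ge3\}$ is bounded and $\lim_{d\to\infty}\beta_d=0$. For $d\ge3$ let $$\mathcal{E}_d(\infty)=\sum_{m\ge2}F_d(m)\left(B^2\frac{d\,m^{2\alpha_d}}{\varphi(m)\log(m)^{1-2\beta_d}}\right)^{\varphi(d)/4}.$$ Then $$\sum_{d\ge3\,:\,\varphi(d)(1-2\alpha_d)>4}\mathcal{E}_d(\infty)<\infty.$$
   Context: $F_d(m)$ denotes the number of even primitive Dirichlet characters of order $d$ and conductor $m$; $\varphi$ is Euler's totient function. *)

theory Defs
  imports "HOL-Analysis.Analysis" "HOL-Number_Theory.Number_Theory"
begin

definition dirichlet_char :: "nat \<Rightarrow> (nat \<Rightarrow> complex) \<Rightarrow> bool" where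
  "dirichlet_char m c \<longleftrightarrow> m \<ge> 1 \<and> c 1 = 1 \<and>
     (\<forall>a b. c (a * b) = c a * c b) \<and>
     (\<forall>a. c (a + m) = c a) \<and>
     (\<forall>a. c a \<noteq> 0 \<longleftrightarrow> coprime a m)"

definition char_order :: "nat \<Rightarrow> (nat \<Rightarrow> complex) \<Rightarrow> nat" where
  "char_order m c = (LEAST k. k > 0 \<and> (\<forall>a. coprime a m \<longrightarrow> c a ^ k = 1))"

text \<open>Primitive: not induced by a character of a smaller modulus q dividing m,
  i.e. for no proper divisor q of m is c constant on the classes mod q
  (restricted to residues coprime to m). Primitive characters mod m are
  exactly the characters of conductor m.\<close>
definition primitive_char :: "nat \<Rightarrow> (nat \<Rightarrow> complex) \<Rightarrow> bool" where
  "primitive_char m c \<longleftrightarrow> dirichlet_char m c \<and>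
     (\<forall>q. q dvd m \<and> q < m \<longrightarrow>
        (\<exists>a b. coprime a m \<and> coprime b m \<and> [a = b] (mod q) \<and> c a \<noteq> c b))"

text \<open>Even: c(-1) = c(m-1) = 1.\<close>
definition even_char :: "nat \<Rightarrow> (nat \<Rightarrow> complex) \<Rightarrow> bool" where
  "even_char m c \<longleftrightarrow> c (m - 1) = 1"

definition F :: "nat \<Rightarrow> nat \<Rightarrow> nat" where
  "F d m = card {c. primitive_char m c \<and> even_char m c \<and> char_order m c = d}"

definition E_term :: "real \<Rightarrow> real \<Rightarrow> real \<Rightarrow> nat \<Rightarrow> nat \<Rightarrow> real" where
  "E_term B al be d m = real (F d m) *
     (B^2 * (real d * real m powr (2 * al)) /
        (real (totient m) * ln (real m) powr (1 - 2 * be))) powr (real (totient d) / 4)"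

text \<open>E_d(\<infinity>), as an extended nonnegative real (a sum of nonnegative terms).\<close>
definition E_inf :: "real \<Rightarrow> real \<Rightarrow> real \<Rightarrow> nat \<Rightarrow> ennreal" where
  "E_inf B al be d = (\<Sum>m. if m \<ge> 2 then ennreal (E_term B al be d m) else 0)"

end

theory Submission
  imports Defs "HOL-Real_Asymp.Real_Asymp"
begin

lemma dc_add_mult:
  assumes "dirichlet_char m c" shows "c (a + k*m) = c a"
proof (induction k)
  case (Suc k)
  have "c (a + Suc k * m) = c ((a + k*m) + m)" by (simp add: algebra_simps)
  also have "\<dots> = c (a + k*m)" using assms by (simp add: dirichlet_char_def)
  finally show ?case using Suc by simp
qed simp

lemma dc_mod:
  assumes "dirichlet_char m c" shows "c (a mod m) = c a"
  using dc_add_mult[OF assms, of "a mod m" "a div m"] by simp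

lemma dc_cong:
  assumes "dirichlet_char m c" "[a = b] (mod m)" shows "c a = c b"
  by (metis assms cong_def dc_mod)

lemma dc_power:
  assumes "dirichlet_char m c" shows "c (a ^ k) = c a ^ k"
  using assms by (induction k) (auto simp: dirichlet_char_def)

lemma dc_pow_totient:
  assumes "dirichlet_char m c" "coprime a m" shows "c a ^ totient m = 1"
proof -
  have "c a ^ totient m = c (a ^ totient m)" using dc_power[OF assms(1)] by simp
  also have "\<dots> = c 1" using dc_cong[OF assms(1) euler_theorem[OF assms(2)]] .
  finally show ?thesis using assms by (simp add: dirichlet_char_def)
qed

lemma order_props:
  assumes "dirichlet_char m c"
  shows "\<And>a. coprime a m \<Longrightarrow> c a ^ char_order m c = 1"
    and "0 < char_order m c" and "char_order m c \<le> totient m"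
proof -
  have m: "m \<ge> 1" using assms by (simp add: dirichlet_char_def)
  have P: "totient m > 0 \<and> (\<forall>a. coprime a m \<longrightarrow> c a ^ totient m = 1)"
    using dc_pow_totient[OF assms] m by auto
  have Q: "char_order m c > 0 \<and> (\<forall>a. coprime a m \<longrightarrow> c a ^ char_order m c = 1)"
    unfolding char_order_def by (rule LeastI[of _ "totient m"]) (use P in auto)
  then show "\<And>a. coprime a m \<Longrightarrow> c a ^ char_order m c = 1" "0 < char_order m c" by auto
  show "char_order m c \<le> totient m"
    unfolding char_order_def by (rule Least_le) (use P in auto)
qed

definition gprod :: "nat list \<Rightarrow> nat list \<Rightarrow> nat" where
  "gprod gs es = prod_list (map2 (\<lambda>g e. g ^ e) gs es)"

lemma gprod_Nil[simp]: "gprod [] es = 1" by (simp add: gprod_def)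
lemma gprod_Cons[simp]: "gprod (g # gs) (e # es) = g ^ e * gprod gs es" by (simp add: gprod_def)

lemma gprod_append:
  "length ga = length ea \<Longrightarrow> gprod (ga @ gb) (ea @ eb) = gprod ga ea * gprod gb eb"
  by (simp add: gprod_def)

lemma dc_gprod:
  assumes "dirichlet_char m c"
  shows "c (gprod gs es) = prod_list (map2 (\<lambda>g e. c g ^ e) gs es)"
proof (induction gs arbitrary: es)
  case Nil then show ?case using assms by (simp add: dirichlet_char_def gprod_def)
next
  case (Cons g gs)
  then show ?case
  proof (cases es)
    case Nil then show ?thesis using assms by (simp add: dirichlet_char_def gprod_def)
  next
    case (Cons e es')
    have "c (gprod (g # gs) es) = c (g ^ e) * c (gprod gs es')"
      using assms Cons by (simp add: dirichlet_char_def)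
    then show ?thesis using Cons.IH dc_power[OF assms] \<open>es = e # es'\<close> by simp
  qed
qed

lemma gprod_cong_map:
  assumes "\<And>g. g \<in> set gs \<Longrightarrow> [f g = g] (mod n)"
  shows "[gprod (map f gs) es = gprod gs es] (mod n)"
  using assms
proof (induction gs arbitrary: es)
  case Nil then show ?case by simp
next
  case (Cons g gs)
  show ?case
  proof (cases es)
    case Nil then show ?thesis by (simp add: gprod_def)
  next
    case (Cons e es')
    have "[f g ^ e = g ^ e] (mod n)" using Cons.prems by (intro cong_pow) auto
    moreover have "[gprod (map f gs) es' = gprod gs es'] (mod n)" using Cons.IH Cons.prems by auto
    ultimately show ?thesis using \<open>es = e # es'\<close> by (simp add: cong_mult)
  qed
qed

lemma gprod_cong_one:
  assumes "\<And>g. g \<in> set gs \<Longrightarrow> [f g = 1] (mod n)"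
  shows "[gprod (map f gs) es = 1] (mod n)"
  using assms
proof (induction gs arbitrary: es)
  case Nil then show ?case by simp
next
  case (Cons g gs)
  show ?case
  proof (cases es)
    case Nil then show ?thesis by (simp add: gprod_def)
  next
    case (Cons e es')
    have "[f g ^ e = 1 ^ e] (mod n)" using Cons.prems by (intro cong_pow) auto
    moreover have "[gprod (map f gs) es' = 1] (mod n)" using Cons.IH Cons.prems by auto
    ultimately show ?thesis using \<open>es = e # es'\<close> using cong_mult by fastforce
  qed
qed

definition gens :: "nat \<Rightarrow> nat list \<Rightarrow> bool" where
  "gens m gs \<longleftrightarrow> (\<forall>x. coprime x m \<longrightarrow> (\<exists>es. length es = length gs \<and> [x = gprod gs es] (mod m)))"

lemma gens_one: "gens 1 []"
  by (auto simp: gens_def)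

lemma gens_mult:
  assumes "coprime a b" "gens a ga" "gens b gb"
  shows "gens (a * b) (map (\<lambda>g. SOME y. [y = g] (mod a) \<and> [y = 1] (mod b)) ga @
                       map (\<lambda>g. SOME y. [y = 1] (mod a) \<and> [y = g] (mod b)) gb)"
    (is "gens _ (map ?f ga @ map ?h gb)")
proof -
  have f: "[?f g = g] (mod a) \<and> [?f g = 1] (mod b)" for g
    by (rule someI_ex) (rule binary_chinese_remainder_nat[OF assms(1)])
  have h: "[?h g = 1] (mod a) \<and> [?h g = g] (mod b)" for g
    by (rule someI_ex) (rule binary_chinese_remainder_nat[OF assms(1)])
  show ?thesis unfolding gens_def
  proof (intro allI impI)
    fix x assume x: "coprime x (a * b)"
    then have "coprime x a" "coprime x b" by auto
    then obtain ea eb where ea: "length ea = length ga" "[x = gprod ga ea] (mod a)"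
      and eb: "length eb = length gb" "[x = gprod gb eb] (mod b)"
      using assms unfolding gens_def by blast
    have split: "gprod (map ?f ga @ map ?h gb) (ea @ eb) = gprod (map ?f ga) ea * gprod (map ?h gb) eb"
      using ea by (intro gprod_append) simp
    have "[gprod (map ?f ga) ea * gprod (map ?h gb) eb = gprod ga ea * 1] (mod a)"
      using f h by (intro cong_mult gprod_cong_map gprod_cong_one) auto
    then have C: "[gprod (map ?f ga) ea * gprod (map ?h gb) eb = gprod ga ea] (mod a)" by simp
    have A: "[x = gprod (map ?f ga @ map ?h gb) (ea @ eb)] (mod a)"
      unfolding split by (rule cong_trans[OF ea(2) cong_sym[OF C]])
    have "[gprod (map ?f ga) ea * gprod (map ?h gb) eb = 1 * gprod gb eb] (mod b)"
      using f h by (intro cong_mult gprod_cong_map gprod_cong_one) auto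
    then have D: "[gprod (map ?f ga) ea * gprod (map ?h gb) eb = gprod gb eb] (mod b)" by simp
    have B: "[x = gprod (map ?f ga @ map ?h gb) (ea @ eb)] (mod b)"
      unfolding split by (rule cong_trans[OF eb(2) cong_sym[OF D]])
    show "\<exists>es. length es = length (map ?f ga @ map ?h gb) \<and>
            [x = gprod (map ?f ga @ map ?h gb) es] (mod a * b)"
      using coprime_cong_mult_nat[OF A B assms(1)] ea eb by (intro exI[of _ "ea @ eb"]) auto
  qed
qed


lemma mod_nonzero_coprime:
  fixes x n :: nat assumes "coprime x n" "n > 1" shows "x mod n \<noteq> 0"
proof
  assume "x mod n = 0"
  then have "n dvd x" by (simp add: dvd_eq_mod_eq_0)
  then have "is_unit n" using coprime_common_divisor[OF assms(1)] by auto
  then show False using assms(2) by simp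
qed

lemma mod_in_totatives:
  fixes x n :: nat assumes "coprime x n" "n > 1" shows "x mod n \<in> totatives n"
  using mod_nonzero_coprime[OF assms] assms by (auto simp: in_totatives_iff)

lemma gens_odd_primepow:
  assumes "prime p" "odd p" "k > 0"
  shows "\<exists>g. gens (p ^ k) [g]"
proof -
  obtain g where g: "\<forall>k>0. residue_primroot (p ^ k) g"
    using residue_primroot_odd_prime_power_exists[OF assms(1,2)] by blast
  have gt: "p ^ k > 1" using assms prime_gt_1_nat one_less_power by blast
  have bij: "bij_betw (\<lambda>i. g ^ i mod p ^ k) {..<totient (p ^ k)} (totatives (p ^ k))"
    using residue_primroot_is_generator[OF gt] g assms(3) by blast
  have "gens (p ^ k) [g]" unfolding gens_def
  proof (intro allI impI)
    fix x assume x: "coprime x (p ^ k)"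
    have "x mod p ^ k \<in> (\<lambda>i. g ^ i mod p ^ k) ` {..<totient (p ^ k)}"
      using mod_in_totatives[OF x gt] bij by (simp add: bij_betw_def)
    then obtain i where "x mod p ^ k = g ^ i mod p ^ k" by blast
    then have "[x = gprod [g] [i]] (mod p ^ k)" by (simp add: cong_def)
    then show "\<exists>es. length es = length [g] \<and> [x = gprod [g] es] (mod p ^ k)"
      by (intro exI[of _ "[i]"]) auto
  qed
  then show ?thesis by blast
qed


lemma gens_twopow_ge3:
  assumes "k \<ge> 3"
  shows "gens (2 ^ k) [2 ^ k - 1, 5]"
proof -
  define n :: nat where "n = 2 ^ k"
  define q :: nat where "q = 2 ^ (k - 3)"
  have "(2::nat) ^ k = 2 ^ (3 + (k - 3))" using assms by simp
  then have nq: "n = 8 * q" unfolding n_def q_def by (simp add: power_add)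
  have q0: "q > 0" unfolding q_def by simp
  have n1: "n > 1" using nq q0 by simp
  have cop1: "coprime (n - 1) n"
  proof -
    have "n = Suc (n - 1)" using n1 by simp
    then show ?thesis by (metis coprime_Suc_right_nat)
  qed
  have cop5: "coprime 5 n" unfolding n_def
    by (intro coprime_power_right_iff[THEN iffD2]) auto
  have ord5: "ord n 5 = 2 ^ (k - 2)" unfolding n_def using ord_twopow_3_5[OF assms] by simp
  have m41: "[n - 1 = 3] (mod 4)"
  proof -
    obtain r where r: "q = Suc r" using q0 gr0_implies_Suc by blast
    have "n - 1 = 8 * r + 7" unfolding nq r by simp
    moreover have "(8 * r + 7) mod 4 = (3::nat)" by presburger
    ultimately show ?thesis unfolding cong_def by simp
  qed
  have m45: "[5 ^ i = (1::nat)] (mod 4)" for i :: nat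
    using cong_pow[of "5::nat" 1 4 i] by (simp add: cong_def)
  have totn: "totient n = 2 * 2 ^ (k - 2)"
  proof -
    have e: "k - 1 = Suc (k - 2)" using assms by simp
    have "totient n = 2 ^ (k - 1)" using totient_prime_power[of 2 k] assms by (simp add: n_def)
    also have "\<dots> = 2 * 2 ^ (k - 2)" unfolding e by simp
    finally show ?thesis .
  qed
  define f where "f = (\<lambda>(s::nat, i::nat). (n - 1) ^ s * 5 ^ i mod n)"
  define D where "D = {0::nat, 1} \<times> {..<(2::nat) ^ (k - 2)}"
  have key4: "[(n - 1) ^ s * 5 ^ i = 3 ^ s] (mod 4)" for s i
    using cong_mult[OF cong_pow[OF m41, of s] m45[of i]] by simp
  have inj: "inj_on f D"
  proof (rule inj_onI)
    fix x y assume xy: "x \<in> D" "y \<in> D" "f x = f y"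
    obtain s i where x: "x = (s, i)" by (cases x)
    obtain t j where y: "y = (t, j)" by (cases y)
    have eq: "[(n - 1) ^ s * 5 ^ i = (n - 1) ^ t * 5 ^ j] (mod n)"
      using xy x y by (simp add: f_def cong_def)
    have "4 dvd n" proof -
      have "n = 4 * (2 * q)" using nq by simp
      then show ?thesis by (metis dvd_triv_left)
    qed
    then have "[(n - 1) ^ s * 5 ^ i = (n - 1) ^ t * 5 ^ j] (mod 4)"
      using eq cong_dvd_modulus_nat by blast
    then have "[3 ^ s = (3::nat) ^ t] (mod 4)"
      using key4[of s i] key4[of t j] cong_sym cong_trans by blast
    then have st: "s = t" using xy x y unfolding D_def by (auto simp: cong_def)
    have cpow: "coprime ((n - 1) ^ s) n" using cop1 by simp
    have "[5 ^ i = 5 ^ j] (mod n)" using eq st cong_mult_lcancel_nat[OF cpow] by simp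
    then have ij: "5 ^ i mod n = 5 ^ j mod n" by (simp add: cong_def)
    have c5: "coprime n 5" using cop5 by (simp add: coprime_commute)
    have "i \<in> {..<ord n 5}" "j \<in> {..<ord n 5}" using xy x y ord5 unfolding D_def by auto
    then have "i = j" using inj_power_mod[OF c5] ij unfolding inj_on_def by blast
    then show "x = y" using x y st by simp
  qed
  have sub: "f ` D \<subseteq> totatives n"
  proof
    fix z assume "z \<in> f ` D"
    then obtain s i where z: "z = ((n - 1) ^ s * 5 ^ i) mod n" by (auto simp: f_def)
    have cz: "coprime ((n - 1) ^ s * 5 ^ i) n" using cop1 cop5 by simp
    show "z \<in> totatives n" unfolding z by (rule mod_in_totatives[OF cz n1])
  qed
  have cardD: "card (f ` D) = card (totatives n)"
    using inj totn by (simp add: card_image D_def card_cartesian_product totient_def)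
  have img: "f ` D = totatives n"
    by (rule card_subset_eq[OF _ sub cardD]) simp
  show ?thesis unfolding gens_def n_def[symmetric]
  proof (intro allI impI)
    fix x assume x: "coprime x n"
    have "x mod n \<in> f ` D" using mod_in_totatives[OF x n1] img by simp
    then obtain s i where "x mod n = f (s, i)" by auto
    then have "[x = gprod [n - 1, 5] [s, i]] (mod n)" by (simp add: cong_def f_def)
    then show "\<exists>es. length es = length [n - 1, 5] \<and> [x = gprod [n - 1, 5] es] (mod n)"
      by (intro exI[of _ "[s, i]"]) auto
  qed
qed


lemma gens_2: "gens 2 []"
  unfolding gens_def
proof (intro allI impI)
  fix x :: nat assume "coprime x 2"
  then have "odd x" by simp
  then have "[x = gprod [] []] (mod 2)" by (simp add: cong_def odd_iff_mod_2_eq_one)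
  then show "\<exists>es. length es = length ([]::nat list) \<and> [x = gprod [] es] (mod 2)" by auto
qed

lemma gens_4: "gens 4 [3]"
  unfolding gens_def
proof (intro allI impI)
  fix x :: nat assume "coprime x 4"
  then have "coprime x (2 ^ 2)" by simp
  then have "coprime x 2" by (simp only: coprime_power_right_iff) simp
  then have "odd x" by simp
  then have "x mod 4 = 1 \<or> x mod 4 = 3" by presburger
  then show "\<exists>es. length es = length [3::nat] \<and> [x = gprod [3] es] (mod 4)"
  proof
    assume "x mod 4 = 1" then show ?thesis by (intro exI[of _ "[0]"]) (simp add: cong_def)
  next
    assume "x mod 4 = 3" then show ?thesis by (intro exI[of _ "[1]"]) (simp add: cong_def)
  qed
qed

lemma gens_primepow:
  assumes "prime p" "k > 0"
  shows "\<exists>gs. gens (p ^ k) gs \<and> length gs \<le> 2"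
proof (cases "p = 2")
  case True
  consider "k = 1" | "k = 2" | "k \<ge> 3" using assms(2) by linarith
  then show ?thesis
  proof cases
    case 1
    then have "gens (p ^ k) []" using gens_2 True by simp
    then show ?thesis by (intro exI[of _ "[]"]) simp
  next
    case 2
    then have "gens (p ^ k) [3]" using gens_4 True by simp
    then show ?thesis by (intro exI[of _ "[3]"]) simp
  next
    case 3
    then have "gens (p ^ k) [2 ^ k - 1, 5]" using gens_twopow_ge3[OF 3] True by simp
    then show ?thesis by (intro exI[of _ "[2 ^ k - 1, 5]"]) simp
  qed
next
  case False
  have "p > 2" using prime_ge_2_nat[OF assms(1)] False by linarith
  then have "odd p" using prime_odd_nat[OF assms(1)] by blast
  then obtain g where "gens (p ^ k) [g]" using gens_odd_primepow[OF assms(1) _ assms(2)] by blast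
  then show ?thesis by (intro exI[of _ "[g]"]) simp
qed

lemma gens_exist:
  "m > 0 \<Longrightarrow> \<exists>gs. gens m gs \<and> length gs \<le> 2 * card (prime_factors m)"
proof (induction m rule: less_induct)
  case (less m)
  show ?case
  proof (cases "m = 1")
    case True then show ?thesis using gens_one by auto
  next
    case False
    then have "m \<noteq> 0" "\<exists>p\<in>prime_factors m. True" using less.prems
      by (auto simp: prime_factors_dvd intro: prime_factor_nat)
    then obtain p k n' where pk: "prime p" "p dvd m" "\<not> p dvd n'" "k > 0" "m = p ^ k * n'"
      using divide_out_primepow_ex[of m "\<lambda>_. True"] by metis
    have n'0: "n' > 0" using pk less.prems by (auto intro!: Nat.gr0I)
    have pk1: "p ^ k > 1" using pk prime_gt_1_nat one_less_power by blast
    have "n' < m" using pk(5) pk1 n'0 by simp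
    then obtain gs' where gs': "gens n' gs'" "length gs' \<le> 2 * card (prime_factors n')"
      using less.IH n'0 by blast
    obtain gp where gp: "gens (p ^ k) gp" "length gp \<le> 2" using gens_primepow[OF pk(1,4)] by blast
    have cop: "coprime (p ^ k) n'" using pk by (simp add: prime_imp_coprime)
    have g: "gens m (map (\<lambda>g. SOME y. [y = g] (mod p ^ k) \<and> [y = 1] (mod n')) gp @
                       map (\<lambda>g. SOME y. [y = 1] (mod p ^ k) \<and> [y = g] (mod n')) gs')"
      using gens_mult[OF cop gp(1) gs'(1)] pk(5) by simp
    have pf: "prime_factors m = insert p (prime_factors n')"
      using pk n'0 by (simp add: prime_factors_product prime_factors_power prime_prime_factors)
    have "p \<notin> prime_factors n'" using pk by (auto simp: in_prime_factors_iff)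
    then have "card (prime_factors m) = Suc (card (prime_factors n'))" unfolding pf by simp
    then show ?thesis using g gp gs' by (intro exI) (auto simp del: gens_def)
  qed
qed

lemma map2_pow_cong:
  "\<forall>g\<in>set gs. f g = f' g \<Longrightarrow> map2 (\<lambda>g e. f g ^ e) gs es = map2 (\<lambda>g e. f' g ^ e) gs es"
proof (induction gs arbitrary: es)
  case (Cons g gs) then show ?case by (cases es) auto
qed simp

lemma F_le:
  assumes "d \<ge> 1" "m \<ge> 1"
  shows "F d m \<le> (d + 1) ^ (2 * card (prime_factors m))"
proof -
  obtain gs where gs: "gens m gs" "length gs \<le> 2 * card (prime_factors m)"
    using gens_exist[of m] assms by auto
  define S where "S = {c. primitive_char m c \<and> even_char m c \<and> char_order m c = d}"
  define R :: "complex set" where "R = insert 0 {z. z ^ d = 1}"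
  have fin1: "finite {z::complex. z ^ d = 1}" using finite_roots_unity[where 'a=complex, of d] assms by auto
  have finR: "finite R" unfolding R_def using fin1 by auto
  have cardR: "card R \<le> d + 1"
  proof -
    have "card R \<le> Suc (card {z::complex. z ^ d = 1})" unfolding R_def
      using fin1 by (simp add: card_insert_if)
    also have "\<dots> \<le> Suc d" using card_roots_unity[where 'a=complex, of d] assms by simp
    finally show ?thesis by simp
  qed
  have dcS: "dirichlet_char m c" "char_order m c = d" if "c \<in> S" for c
    using that unfolding S_def primitive_char_def by auto
  have inj: "inj_on (\<lambda>c. map c gs) S"
  proof (rule inj_onI)
    fix c c' assume cc: "c \<in> S" "c' \<in> S" "map c gs = map c' gs"
    show "c = c'"
    proof
      fix x
      show "c x = c' x"
      proof (cases "coprime x m")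
        case True
        then obtain es where es: "[x = gprod gs es] (mod m)" using gs(1) unfolding gens_def by blast
        have "c x = c (gprod gs es)" using dc_cong[OF dcS(1)[OF cc(1)] es] .
        also have "\<dots> = prod_list (map2 (\<lambda>g e. c g ^ e) gs es)" by (rule dc_gprod[OF dcS(1)[OF cc(1)]])
        also have "\<dots> = prod_list (map2 (\<lambda>g e. c' g ^ e) gs es)"
        proof -
          have "\<forall>g\<in>set gs. c g = c' g" using cc(3) by (simp add: map_eq_conv)
          then have "map2 (\<lambda>g e. c g ^ e) gs es = map2 (\<lambda>g e. c' g ^ e) gs es"
            by (rule map2_pow_cong)
          then show ?thesis by (rule arg_cong[where f=prod_list])
        qed
        also have "\<dots> = c' (gprod gs es)" by (rule dc_gprod[OF dcS(1)[OF cc(2)], symmetric])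
        also have "\<dots> = c' x" using dc_cong[OF dcS(1)[OF cc(2)] es] by simp
        finally show ?thesis .
      next
        case False
        then have "c x = 0" "c' x = 0" using dcS(1)[OF cc(1)] dcS(1)[OF cc(2)] unfolding dirichlet_char_def by blast+
        then show ?thesis by simp
      qed
    qed
  qed
  have sub: "(\<lambda>c. map c gs) ` S \<subseteq> {xs. set xs \<subseteq> R \<and> length xs = length gs}"
  proof -
    have *: "set (map c gs) \<subseteq> R" if c: "c \<in> S" for c
    proof
      fix x assume x: "x \<in> set (map c gs)"
      then obtain g where g: "x = c g" by auto
      show "x \<in> R"
      proof (cases "coprime g m")
        case True
        then have "c g ^ d = 1" using order_props(1)[OF dcS(1)[OF c] True] dcS(2)[OF c] by simp
        then show ?thesis unfolding R_def g by simp
      next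
        case False
        then have "c g = 0" using dcS(1)[OF c] unfolding dirichlet_char_def by blast
        then show ?thesis unfolding R_def g by simp
      qed
    qed
    show ?thesis
    proof (rule image_subsetI)
      fix c assume "c \<in> S"
      then have "set (map c gs) \<subseteq> R" by (rule *)
      then show "map c gs \<in> {xs. set xs \<subseteq> R \<and> length xs = length gs}" by simp
    qed
  qed
  have "F d m = card S" unfolding F_def S_def ..
  also have "\<dots> = card ((\<lambda>c. map c gs) ` S)" using card_image[OF inj] by simp
  also have "\<dots> \<le> card {xs. set xs \<subseteq> R \<and> length xs = length gs}"
    by (rule card_mono[OF _ sub]) (simp add: finite_lists_length_eq finR)
  also have "\<dots> = card R ^ length gs" by (rule card_lists_length_eq[OF finR])
  also have "\<dots> \<le> (d + 1) ^ length gs" by (rule power_mono[OF cardR]) simp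
  also have "\<dots> \<le> (d + 1) ^ (2 * card (prime_factors m))" by (rule power_increasing[OF gs(2)]) simp
  finally show ?thesis .
qed

lemma F_pos:
  assumes "F d m > 0"
  shows "m \<ge> 1" "d \<le> totient m"
proof -
  have "{c. primitive_char m c \<and> even_char m c \<and> char_order m c = d} \<noteq> {}"
    using assms unfolding F_def by (auto simp: card_gt_0_iff)
  then obtain c where c: "dirichlet_char m c" "char_order m c = d"
    unfolding primitive_char_def by auto
  show "m \<ge> 1" using c by (simp add: dirichlet_char_def)
  show "d \<le> totient m" using order_props(3)[OF c(1)] c(2) by simp
qed


lemma prod_pf_le:
  assumes "m > (0::nat)" shows "(\<Prod>p\<in>prime_factors m. p) \<le> m"
proof -
  have "(\<Prod>p\<in>prime_factors m. p) \<le> (\<Prod>p\<in>prime_factors m. p ^ multiplicity p m)"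
  proof (rule prod_mono, safe)
    fix p assume p: "p \<in> prime_factors m"
    then have "multiplicity p m \<ge> 1" "p \<ge> 1"
      by (auto simp: prime_factors_multiplicity intro: Suc_leI prime_gt_0_nat)
    then have "p ^ 1 \<le> p ^ multiplicity p m" by (intro power_increasing) auto
    then show "p \<le> p ^ multiplicity p m" by simp
  qed
  also have "\<dots> = m" using prime_factorization_nat[OF assms] by simp
  finally show ?thesis .
qed

lemma prod_pf_sub_le:
  assumes "m > (0::nat)" "A \<subseteq> prime_factors m" shows "(\<Prod>p\<in>A. p) \<le> m"
proof -
  have "(\<Prod>p\<in>A. p) dvd (\<Prod>p\<in>prime_factors m. p)"
    by (rule prod_dvd_prod_subset[OF _ assms(2)]) simp
  moreover have "(\<Prod>p\<in>prime_factors m. p) > 0"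
    by (intro prod_pos) (auto intro: prime_gt_0_nat)
  ultimately have "(\<Prod>p\<in>A. p) \<le> (\<Prod>p\<in>prime_factors m. p)" by (rule dvd_imp_le)
  then show ?thesis using prod_pf_le[OF assms(1)] by linarith
qed

lemma two_pow_omega:
  assumes "m > (0::nat)" shows "2 ^ card (prime_factors m) \<le> m"
proof -
  have "(2::nat) ^ card (prime_factors m) = (\<Prod>p\<in>prime_factors m. 2)" by simp
  also have "\<dots> \<le> (\<Prod>p\<in>prime_factors m. p)"
    by (rule prod_mono) (auto intro: prime_ge_2_nat)
  also have "\<dots> \<le> m" by (rule prod_pf_le[OF assms])
  finally show ?thesis .
qed

lemma omega_pow_bound:
  fixes K \<epsilon> :: real
  assumes K: "K \<ge> 1" and e: "\<epsilon> > 0"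
  shows "\<exists>C>0. \<forall>m>0. K ^ card (prime_factors m) \<le> C * real m powr \<epsilon>"
proof -
  define T where "T = nat \<lceil>K powr (1 / \<epsilon>)\<rceil>"
  define C where "C = K ^ (T + 1)"
  have C0: "C > 0" unfolding C_def using K by simp
  have "K ^ card (prime_factors m) \<le> C * real m powr \<epsilon>" if m: "m > 0" for m
  proof -
    define P where "P = prime_factors m"
    define P1 where "P1 = {p\<in>P. p \<le> T}"
    define P2 where "P2 = {p\<in>P. \<not> p \<le> T}"
    have fin: "finite P1" "finite P2" unfolding P1_def P2_def P_def by auto
    have PU: "P = P1 \<union> P2" "P1 \<inter> P2 = {}" unfolding P1_def P2_def by auto
    have e1: "K ^ card P = (\<Prod>p\<in>P1. K) * (\<Prod>p\<in>P2. K)"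
      unfolding PU(1) using prod.union_disjoint[OF fin PU(2), of "\<lambda>_. K"] by simp
    have e2: "(\<Prod>p\<in>P1. K) \<le> C"
    proof -
      have "P1 \<subseteq> {..T}" unfolding P1_def by auto
      then have "card P1 \<le> T + 1" using card_mono[of "{..T}" P1] by simp
      then have "K ^ card P1 \<le> K ^ (T + 1)" using K by (intro power_increasing) auto
      then show ?thesis unfolding C_def by simp
    qed
    have e3: "(\<Prod>p\<in>P2. K) \<le> (\<Prod>p\<in>P2. real p powr \<epsilon>)"
    proof (rule prod_mono, safe)
      fix p assume p: "p \<in> P2"
      show "0 \<le> K" using K by simp
      have "K powr (1 / \<epsilon>) \<le> real T" unfolding T_def by linarith
      also have "real T < real p" using p unfolding P2_def by auto
      finally have "K powr (1 / \<epsilon>) \<le> real p" by simp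
      then have "(K powr (1 / \<epsilon>)) powr \<epsilon> \<le> real p powr \<epsilon>"
        using e K by (intro powr_mono2) auto
      then show "K \<le> real p powr \<epsilon>" using e K by (simp add: powr_powr)
    qed
    have e4: "(\<Prod>p\<in>P2. real p powr \<epsilon>) = real (\<Prod>p\<in>P2. p) powr \<epsilon>"
      by (simp add: prod_powr_distrib)
    have e5: "real (\<Prod>p\<in>P2. p) powr \<epsilon> \<le> real m powr \<epsilon>"
    proof -
      have "(\<Prod>p\<in>P2. p) \<le> m" using prod_pf_sub_le[OF m] unfolding P2_def P_def by auto
      then have h: "real (\<Prod>p\<in>P2. p) \<le> real m" by (simp only: of_nat_le_iff)
      have h0: "0 \<le> real (\<Prod>p\<in>P2. p)" by (simp only: of_nat_0_le_iff)
      show ?thesis by (rule powr_mono2[OF _ h0 h]) (use e in simp)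
    qed
    have "(\<Prod>p\<in>P2. K) \<le> real m powr \<epsilon>" using e3 e4 e5 by simp
    then have "(\<Prod>p\<in>P1. K) * (\<Prod>p\<in>P2. K) \<le> C * real m powr \<epsilon>"
      using e2 K C0 by (intro mult_mono) (auto intro: prod_nonneg)
    then show ?thesis using e1 unfolding P_def by simp
  qed
  then show ?thesis using C0 by blast
qed

lemma totient_ratio:
  assumes "m > (0::nat)"
  shows "real m \<le> 2 ^ card (prime_factors m) * real (totient m)"
proof -
  have "(\<Prod>p\<in>prime_factors m. (1/2::real)) \<le> (\<Prod>p\<in>prime_factors m. 1 - 1 / real p)"
  proof (rule prod_mono, safe)
    fix p assume "p \<in> prime_factors m"
    then have "real p \<ge> 2" using prime_ge_2_nat by (auto simp: in_prime_factors_iff)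
    then show "1 / 2 \<le> 1 - 1 / real p" by (simp add: field_simps)
  qed simp
  then have "(1/2) ^ card (prime_factors m) \<le> (\<Prod>p\<in>prime_factors m. 1 - 1 / real p)" by simp
  then have "real m * (1/2) ^ card (prime_factors m) \<le> real (totient m)"
    using totient_formula2[of m] by (simp add: mult_left_mono)
  then show ?thesis by (simp add: field_simps power_divide)
qed

lemma sqrt_totient:
  "\<exists>C>0. \<forall>m>0. sqrt (real m) \<le> C * real (totient m)"
proof -
  obtain C where C: "C > 0" "\<forall>m>0. (2::real) ^ card (prime_factors m) \<le> C * real m powr (1/2)"
    using omega_pow_bound[of 2 "1/2"] by auto
  have "sqrt (real m) \<le> C * real (totient m)" if m: "m > 0" for m
  proof -
    have s: "real m powr (1/2) = sqrt (real m)" by (simp add: powr_half_sqrt)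
    have "real m \<le> 2 ^ card (prime_factors m) * real (totient m)" by (rule totient_ratio[OF m])
    also have "\<dots> \<le> C * sqrt (real m) * real (totient m)"
      using C(2)[rule_format, OF m] s by (intro mult_right_mono) auto
    finally have "sqrt (real m) * sqrt (real m) \<le> sqrt (real m) * (C * real (totient m))"
      by (simp add: algebra_simps real_sqrt_mult_self)
    moreover have "sqrt (real m) > 0" using m by simp
    ultimately show ?thesis using mult_le_cancel_left_pos by blast
  qed
  then show ?thesis using C(1) by blast
qed


lemma E_term_decomp:
  fixes B al be t :: real and d m :: nat
  assumes B: "B > 0" and d: "d \<ge> 1" and m: "m \<ge> 2"
  defines "t \<equiv> real (totient d) / 4"
  shows "E_term B al be d m = real (F d m) *
     ((B^2 * real d / real (totient m)) powr t * real m powr (2 * al * t) / ln (real m) powr ((1 - 2 * be) * t))"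
proof -
  have ph: "real (totient m) > 0" using m by simp
  have L: "ln (real m) > 0" using m by simp
  have x: "real d > 0" using d by simp
  have y: "real m > 0" using m by simp
  have eq: "B^2 * (real d * real m powr (2 * al)) / (real (totient m) * ln (real m) powr (1 - 2 * be))
      = (B^2 * real d / real (totient m)) * real m powr (2 * al) / ln (real m) powr (1 - 2 * be)"
    by (simp add: field_simps)
  have "((B^2 * real d / real (totient m)) * real m powr (2 * al) / ln (real m) powr (1 - 2 * be)) powr t
      = (B^2 * real d / real (totient m)) powr t * (real m powr (2 * al)) powr t / (ln (real m) powr (1 - 2 * be)) powr t"
    using B ph L x y by (simp add: powr_divide powr_mult)
  also have "\<dots> = (B^2 * real d / real (totient m)) powr t * real m powr (2 * al * t) / ln (real m) powr ((1 - 2 * be) * t)"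
    by (simp add: powr_powr)
  finally show ?thesis unfolding E_term_def eq t_def by simp
qed

lemma F_le_real:
  assumes "d \<ge> 1" "m \<ge> 1"
  shows "real (F d m) \<le> ((real d + 1) ^ 2) ^ card (prime_factors m)"
proof -
  have "F d m \<le> (d + 1) ^ (2 * card (prime_factors m))" by (rule F_le[OF assms])
  then have "real (F d m) \<le> real ((d + 1) ^ (2 * card (prime_factors m)))" by (simp only: of_nat_le_iff)
  then show ?thesis by (simp add: power_mult add.commute)
qed

lemma F_le_powr:
  assumes "d \<ge> 1" "m \<ge> 1"
  shows "real (F d m) \<le> real m powr (2 * log 2 (real d + 1))"
proof -
  define w where "w = card (prime_factors m)"
  have "real (F d m) \<le> ((real d + 1) ^ 2) ^ w" using F_le_real[OF assms] unfolding w_def .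
  also have "((real d + 1) ^ 2) ^ w = (2 powr (2 * log 2 (real d + 1))) ^ w"
  proof -
    have l: "2 powr (log 2 (real d + 1)) = real d + 1" by simp
    have "2 powr (2 * log 2 (real d + 1)) = (2 powr (log 2 (real d + 1))) powr 2"
      by (simp only: powr_powr mult.commute)
    also have "\<dots> = (real d + 1) powr 2" by (simp only: l)
    also have "\<dots> = (real d + 1) ^ 2" by (simp add: powr_numeral)
    finally show ?thesis by simp
  qed
  also have "\<dots> = (2 ^ w) powr (2 * log 2 (real d + 1))"
    by (simp add: powr_powr powr_realpow[symmetric] mult.commute)
  also have "\<dots> \<le> real m powr (2 * log 2 (real d + 1))"
  proof (rule powr_mono2)
    show "0 \<le> 2 * log 2 (real d + 1)" using assms by simp
    show "0 \<le> (2::real) ^ w" by simp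
    have "2 ^ w \<le> m" unfolding w_def by (rule two_pow_omega) (use assms in simp)
    then show "(2::real) ^ w \<le> real m" by (metis of_nat_le_iff of_nat_numeral of_nat_power)
  qed
  finally show ?thesis .
qed


lemma mult_mono3:
  fixes a b c a' b' c' :: real
  assumes "0 \<le> a" "a \<le> a'" "0 \<le> b" "b \<le> b'" "0 \<le> c" "c \<le> c'"
  shows "a * b * c \<le> a' * b' * c'"
proof -
  have "a * b \<le> a' * b'" using assms by (intro mult_mono) auto
  then show ?thesis using assms by (intro mult_mono) auto
qed

lemma small_d_bound:
  fixes B al be :: real and d :: nat
  assumes B: "B > 0" and d: "d \<ge> 3" and cond: "real (totient d) * (1 - 2 * al) > 4"
  shows "summable (\<lambda>m. if m \<ge> 2 then E_term B al be d m else 0)"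
proof -
  define t where "t = real (totient d) / 4"
  define s where "s = t * (1 - 2 * al)"
  have t0: "t > 0" unfolding t_def using d by simp
  have s1: "s > 1" unfolding s_def t_def using cond by simp
  define \<delta> where "\<delta> = (s - 1) / 4"
  have \<delta>0: "\<delta> > 0" unfolding \<delta>_def using s1 by simp
  define K where "K = (real d + 1) ^ 2 * 2 powr t"
  have K1: "K \<ge> 1"
  proof -
    have "1 \<le> (real d + 1) ^ 2" by simp
    moreover have "1 \<le> (2::real) powr t" using t0 by (intro ge_one_powr_ge_zero) auto
    ultimately have "1 * 1 \<le> (real d + 1) ^ 2 * 2 powr t" by (intro mult_mono) auto
    then show ?thesis unfolding K_def by simp
  qed
  obtain C1 where C1: "C1 > 0" "\<forall>m>0. K ^ card (prime_factors m) \<le> C1 * real m powr \<delta>"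
    using omega_pow_bound[OF K1 \<delta>0] by blast
  define \<gamma> where "\<gamma> = (1 - 2 * be) * t"
  define g where "g = \<bar>\<gamma>\<bar>"
  define a0 where "a0 = \<delta> / (g + 1)"
  have a0: "a0 > 0" unfolding a0_def g_def using \<delta>0 by simp
  define C2 where "C2 = (1 / a0) powr g"
  have a0g: "a0 * g \<le> \<delta>"
  proof -
    have "a0 * g = \<delta> * (g / (g + 1))" unfolding a0_def by simp
    also have "\<dots> \<le> \<delta> * 1" using \<delta>0 unfolding g_def by (intro mult_left_mono) auto
    finally show ?thesis by simp
  qed
  have Lb: "1 / ln (real m) powr \<gamma> \<le> C2 * real m powr \<delta>" if m: "m \<ge> 3" for m :: nat
  proof -
    have L1: "ln (real m) \<ge> 1"
    proof -
      have "ln (3::real) \<le> ln (real m)" using m by simp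
      then show ?thesis using ln3_gt_1 by simp
    qed
    have y1: "real m \<ge> 1" using m by simp
    have "1 / ln (real m) powr \<gamma> = ln (real m) powr (- \<gamma>)"
      by (simp add: powr_minus divide_inverse)
    also have "\<dots> \<le> ln (real m) powr g" unfolding g_def using L1 by (intro powr_mono) auto
    also have "\<dots> \<le> (real m powr a0 / a0) powr g"
      using ln_powr_bound[OF y1 a0] L1 unfolding g_def by (intro powr_mono2) auto
    also have "\<dots> = real m powr (a0 * g) * C2"
      unfolding C2_def by (simp add: powr_divide powr_powr)
    also have "\<dots> \<le> real m powr \<delta> * C2"
      using a0g y1 unfolding C2_def by (intro mult_right_mono powr_mono) auto
    finally show ?thesis by (simp add: mult.commute)
  qed
  define Const where "Const = (B^2 * real d) powr t * C2 * C1"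
  have bound: "E_term B al be d m \<le> Const * real m powr (- (1 + 2 * \<delta>))" if m: "m \<ge> 3" for m :: nat
  proof -
    define w where "w = card (prime_factors m)"
    define ph where "ph = real (totient m)"
    define y where "y = real m"
    have ph0: "ph > 0" unfolding ph_def using m by simp
    have y0: "y > 0" unfolding y_def using m by simp
    have dec: "E_term B al be d m = real (F d m) *
       ((B^2 * real d / ph) powr t * y powr (2 * al * t) / ln y powr \<gamma>)"
      unfolding ph_def y_def \<gamma>_def t_def using E_term_decomp[OF B _ , of d m al be] d m by simp
    have f1: "real (F d m) \<le> ((real d + 1) ^ 2) ^ w" unfolding w_def using F_le_real[of d m] d m by simp
    have f2: "(B^2 * real d / ph) powr t \<le> (B^2 * real d) powr t * (2 powr t) ^ w / y powr t"
    proof -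
      have "y \<le> 2 ^ w * ph" unfolding y_def ph_def w_def using totient_ratio[of m] m by simp
      then have "y / 2 ^ w \<le> ph" by (simp add: field_simps)
      then have "(y / 2 ^ w) powr t \<le> ph powr t" using t0 y0 by (intro powr_mono2) auto
      then have *: "y powr t / (2 powr t) ^ w \<le> ph powr t"
        by (simp add: powr_divide powr_realpow[symmetric] powr_powr mult.commute)
      have "(B^2 * real d / ph) powr t = (B^2 * real d) powr t / ph powr t" by (simp add: powr_divide)
      also have "\<dots> \<le> (B^2 * real d) powr t / (y powr t / (2 powr t) ^ w)"
        using * y0 ph0 by (intro divide_left_mono) auto
      also have "\<dots> = (B^2 * real d) powr t * (2 powr t) ^ w / y powr t" by simp
      finally show ?thesis .
    qed
    have f3: "1 / ln y powr \<gamma> \<le> C2 * y powr \<delta>" unfolding y_def by (rule Lb[OF m])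
    have "E_term B al be d m = real (F d m) * (B^2 * real d / ph) powr t * (1 / ln y powr \<gamma>) * y powr (2 * al * t)"
      unfolding dec by simp
    also have "\<dots> \<le> ((real d + 1) ^ 2) ^ w * ((B^2 * real d) powr t * (2 powr t) ^ w / y powr t) * (C2 * y powr \<delta>)
                   * y powr (2 * al * t)"
      by (intro mult_right_mono mult_mono3 f1 f2 f3) auto
    also have "\<dots> = (B^2 * real d) powr t * C2 * K ^ w * (y powr (2 * al * t) * y powr \<delta> / y powr t)"
      unfolding K_def by (simp add: power_mult_distrib field_simps)
    also have "y powr (2 * al * t) * y powr \<delta> / y powr t = y powr (- (1 + 2 * \<delta>) - \<delta>)"
    proof -
      have "- (1 + 2 * \<delta>) - \<delta> = 2 * al * t + \<delta> - t"
        unfolding \<delta>_def s_def by (simp add: field_simps)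
      then show ?thesis by (simp add: powr_add powr_diff)
    qed
    also have "(B^2 * real d) powr t * C2 * K ^ w * y powr (- (1 + 2 * \<delta>) - \<delta>)
        \<le> (B^2 * real d) powr t * C2 * (C1 * y powr \<delta>) * y powr (- (1 + 2 * \<delta>) - \<delta>)"
      using C1(2) m unfolding w_def y_def C2_def
      by (intro mult_right_mono mult_left_mono) auto
    also have "\<dots> = (B^2 * real d) powr t * C2 * C1 * (y powr \<delta> * y powr (- (1 + 2 * \<delta>) - \<delta>))"
      by (simp only: mult_ac)
    also have "y powr \<delta> * y powr (- (1 + 2 * \<delta>) - \<delta>) = y powr (- (1 + 2 * \<delta>))"
      by (simp add: powr_add[symmetric] algebra_simps)
    also have "(B^2 * real d) powr t * C2 * C1 * y powr (- (1 + 2 * \<delta>)) = Const * y powr (- (1 + 2 * \<delta>))"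
      unfolding Const_def ..
    finally show ?thesis unfolding y_def .
  qed
  have sum: "summable (\<lambda>m. Const * real m powr (- (1 + 2 * \<delta>)))"
    using \<delta>0 by (intro summable_mult) (simp add: summable_real_powr_iff)
  show ?thesis
  proof (rule summable_comparison_test_ev[OF _ sum])
    have "\<forall>m\<ge>3. norm (if m \<ge> 2 then E_term B al be d m else 0) \<le> Const * real m powr (- (1 + 2 * \<delta>))"
    proof (intro allI impI)
      fix m :: nat assume m: "m \<ge> 3"
      have "E_term B al be d m \<ge> 0" unfolding E_term_def by simp
      then show "norm (if m \<ge> 2 then E_term B al be d m else 0) \<le> Const * real m powr (- (1 + 2 * \<delta>))"
        using bound[OF m] m by simp
    qed
    then show "eventually (\<lambda>m. norm (if m \<ge> 2 then E_term B al be d m else 0) \<le> Const * real m powr (- (1 + 2 * \<delta>))) sequentially"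
      unfolding eventually_sequentially by blast
  qed
qed


lemma large_d:
  fixes B A :: real
  assumes B: "B > 0" and A: "A \<ge> 0"
  shows "\<exists>D1. \<forall>d\<ge>D1. \<forall>al be. al * real (totient d) \<le> A \<longrightarrow> \<bar>be\<bar> \<le> 1/4 \<longrightarrow>
           (\<forall>m\<ge>2. E_term B al be d m \<le> 1 / (real m ^ 2 * real d ^ 2))"
proof -
  obtain Cp where Cp: "Cp > 0" "\<forall>m>0. sqrt (real m) \<le> Cp * real (totient m)"
    using sqrt_totient by blast
  define M where "M = max (B^2) 1"
  have M1: "M \<ge> 1" and MB: "B^2 \<le> M" unfolding M_def by auto
  define P where "P = (\<lambda>x::real. 3 \<le> x \<and> 4 * M^2 \<le> ln x \<and>
     (8 * log 2 (x + 1) + 2 * A + 10) * ln x \<le> ln 2 * (sqrt x / (4 * Cp)) \<and>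
     2 * log 2 (x + 1) + A / 2 + 5 / 2 \<le> sqrt x / (32 * Cp) \<and> M * Cp \<le> sqrt x)"
  have ev: "eventually P at_top"
  proof -
    have e1: "eventually (\<lambda>x::real. 3 \<le> x) at_top" by real_asymp
    have e2: "eventually (\<lambda>x::real. 4 * M^2 \<le> ln x) at_top" by real_asymp
    have e3: "eventually (\<lambda>x. (8 * log 2 (x + 1) + 2 * A + 10) * ln x \<le> ln 2 * (sqrt x / (4 * Cp))) at_top"
      using Cp(1) by real_asymp
    have e4: "eventually (\<lambda>x. 2 * log 2 (x + 1) + A / 2 + 5 / 2 \<le> sqrt x / (32 * Cp)) at_top"
      using Cp(1) by real_asymp
    have e5: "eventually (\<lambda>x::real. M * Cp \<le> sqrt x) at_top" by real_asymp
    show ?thesis unfolding P_def using e1 e2 e3 e4 e5 by (intro eventually_conj)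
  qed
  have "eventually (\<lambda>d. P (real d)) sequentially"
    using filterlim_real_sequentially[unfolded filterlim_iff] ev by blast
  then obtain D1 where D1: "\<And>d. d \<ge> D1 \<Longrightarrow> P (real d)" by (auto simp: eventually_sequentially)
  have main: "E_term B al be d m \<le> 1 / (real m ^ 2 * real d ^ 2)"
    if d: "d \<ge> D1" and al: "al * real (totient d) \<le> A" and be: "\<bar>be\<bar> \<le> 1/4" and m: "m \<ge> 2"
    for d al be m
  proof (cases "F d m = 0")
    case True
    then show ?thesis unfolding E_term_def by simp
  next
    case False
    then have dm: "d \<le> totient m" using F_pos[of d m] by simp
    have mlt: "totient m < m" using totient_less[of m] m by simp
    define x where "x = real d"
    define y where "y = real m"
    define n where "n = real (totient d)"
    define t where "t = n / 4"
    define ph where "ph = real (totient m)"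
    define L where "L = ln y"
    define lam where "lam = 2 * log 2 (x + 1)"
    define t0 where "t0 = sqrt x / (4 * Cp)"
    have Px: "P x" unfolding x_def using D1[OF d] .
    then have x3: "3 \<le> x" and lnx: "4 * M^2 \<le> ln x"
      and R3: "(8 * log 2 (x + 1) + 2 * A + 10) * ln x \<le> ln 2 * t0"
      and R4: "lam + A / 2 + 5 / 2 \<le> t0 / 8"
      and R5: "M * Cp \<le> sqrt x"
      unfolding P_def t0_def lam_def by (auto simp: field_simps)
    have d1: "d \<ge> 1" using x3 unfolding x_def by simp
    have x0: "x > 0" using x3 by simp
    have xph: "x \<le> ph" unfolding x_def ph_def using dm by simp
    have phy: "ph < y" unfolding y_def ph_def using mlt by simp
    have ph0: "ph > 0" using x0 xph by simp
    have y0: "y > 0" and y1: "y \<ge> 1" using x3 xph phy by auto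
    have xy: "x < y" using xph phy by simp
    have n0: "n > 0" unfolding n_def using d1 by simp
    have t0pos: "t > 0" unfolding t_def using n0 by simp
    have tt0: "t0 \<le> t"
    proof -
      have "sqrt x \<le> Cp * n" unfolding x_def n_def using Cp(2) d1 by simp
      then show ?thesis unfolding t0_def t_def using Cp(1) by (simp add: field_simps)
    qed
    have M2: "4 \<le> 4 * M^2" using M1 by (simp add: one_le_power)
    have Lx: "ln x \<le> L" unfolding L_def using xy x0 by simp
    have L1: "L \<ge> 1" using Lx lnx M2 by linarith
    have L0: "L > 0" using L1 by simp
    have lam0: "lam \<ge> 0" unfolding lam_def using x0 by simp
    have dec: "E_term B al be d m = real (F d m) *
       ((B^2 * x / ph) powr t * y powr (2 * al * t) / L powr ((1 - 2 * be) * t))"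
      unfolding x_def ph_def y_def L_def t_def n_def using E_term_decomp[OF B d1 m, of al be] by simp
    have Fb: "real (F d m) \<le> y powr lam" unfolding y_def lam_def x_def using F_le_powr[OF d1] m by simp
    have Qb: "y powr (2 * al * t) \<le> y powr (A / 2)"
    proof (rule powr_mono[OF _ y1])
      show "2 * al * t \<le> A / 2" using al unfolding t_def n_def by simp
    qed
    have Lg: "L powr (t / 2) \<le> L powr ((1 - 2 * be) * t)"
    proof (rule powr_mono[OF _ L1])
      have "1 / 2 \<le> 1 - 2 * be" using be by simp
      then show "t / 2 \<le> (1 - 2 * be) * t" using t0pos by (simp add: mult_right_mono)
    qed
    define Pw where "Pw = (B^2 * x / ph) powr t"
    have Pw0: "Pw \<ge> 0" unfolding Pw_def by simp
    have core: "E_term B al be d m \<le> y powr lam * Pw * y powr (A / 2) * (1 / L powr (t / 2))"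
    proof -
      have "E_term B al be d m = (real (F d m) * Pw) * y powr (2 * al * t) * (1 / L powr ((1 - 2 * be) * t))"
        unfolding dec Pw_def by simp
      also have "\<dots> \<le> (y powr lam * Pw) * y powr (A / 2) * (1 / L powr (t / 2))"
      proof (rule mult_mono3)
        show "real (F d m) * Pw \<le> y powr lam * Pw" using Fb Pw0 by (rule mult_right_mono)
        show "1 / L powr ((1 - 2 * be) * t) \<le> 1 / L powr (t / 2)"
          using Lg L0 by (intro divide_left_mono) auto
      qed (use Qb Pw0 in auto)
      finally show ?thesis by simp
    qed
    show ?thesis
    proof (cases "y \<le> x ^ 4")
      case True
      have Pw1: "Pw \<le> M powr t"
      proof -
        have "x / ph \<le> 1" using xph ph0 by simp
        then have "B^2 * (x / ph) \<le> B^2 * 1" by (intro mult_left_mono) auto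
        then have "B^2 * x / ph \<le> B^2 * 1" by simp
        also have "\<dots> \<le> M" using MB by simp
        finally show ?thesis unfolding Pw_def using t0pos x0 ph0 by (intro powr_mono2) auto
      qed
      have Lb: "2 powr t * M powr t \<le> L powr (t / 2)"
      proof -
        have "(4 * M^2) powr (t / 2) \<le> L powr (t / 2)"
          using lnx Lx M1 t0pos by (intro powr_mono2) auto
        moreover have "(4 * M^2) powr (t / 2) = 2 powr t * M powr t"
        proof -
          have "(4 * M^2) powr (t / 2) = (2 * M) powr t"
          proof -
            have e: "4 * M^2 = (2 * M) powr 2" using M1 by (simp add: power2_eq_square)
            have "(4 * M^2) powr (t / 2) = ((2 * M) powr 2) powr (t / 2)" by (simp only: e)
            also have "\<dots> = (2 * M) powr t" by (simp add: powr_powr)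
            finally show ?thesis .
          qed
          then show ?thesis by (simp add: powr_mult)
        qed
        ultimately show ?thesis by simp
      qed
      have PL: "Pw * (1 / L powr (t / 2)) \<le> 1 / 2 powr t0"
      proof -
        have "Pw * (1 / L powr (t / 2)) \<le> M powr t * (1 / (2 powr t * M powr t))"
          using Pw1 Lb M1 Pw0 L0 by (intro mult_mono divide_left_mono) auto
        also have "\<dots> = 1 / 2 powr t" using M1 by simp
        also have "\<dots> \<le> 1 / 2 powr t0" using tt0 by (intro divide_left_mono powr_mono) auto
        finally show ?thesis .
      qed
      have Yb: "y powr lam * y powr (A / 2) \<le> x powr (4 * lam + 2 * A)"
      proof -
        have "y powr lam * y powr (A / 2) = y powr (lam + A / 2)" by (simp add: powr_add)
        also have "\<dots> \<le> (x ^ 4) powr (lam + A / 2)" using True y0 lam0 A by (intro powr_mono2) auto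
        also have "(x ^ 4) powr (lam + A / 2) = x powr (4 * lam + 2 * A)"
        proof -
          have e: "x ^ 4 = x powr 4" using x0 by simp
          have "(x ^ 4) powr (lam + A / 2) = (x powr 4) powr (lam + A / 2)" by (simp only: e)
          also have "\<dots> = x powr (4 * (lam + A / 2))" by (simp only: powr_powr)
          also have "4 * (lam + A / 2) = 4 * lam + 2 * A" by simp
          finally show ?thesis .
        qed
        finally show ?thesis .
      qed
      have E1: "E_term B al be d m \<le> x powr (4 * lam + 2 * A) / 2 powr t0"
      proof -
        have "E_term B al be d m \<le> (y powr lam * y powr (A / 2)) * (Pw * (1 / L powr (t / 2)))"
          using core by (simp add: mult_ac)
        also have "\<dots> \<le> x powr (4 * lam + 2 * A) * (1 / 2 powr t0)"
          using Yb PL Pw0 by (intro mult_mono) auto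
        finally show ?thesis by simp
      qed
      have E2: "x powr (4 * lam + 2 * A) / 2 powr t0 \<le> x powr (-10)"
      proof -
        have "(4 * lam + 2 * A) * ln x - t0 * ln 2 \<le> -10 * ln x"
          using R3 unfolding lam_def by (simp add: algebra_simps)
        then have "exp ((4 * lam + 2 * A) * ln x - t0 * ln 2) \<le> exp (-10 * ln x)" by simp
        then show ?thesis using x0 by (simp add: powr_def exp_diff)
      qed
      have E3: "x powr (-10) \<le> 1 / (y ^ 2 * x ^ 2)"
      proof -
        have "y ^ 2 \<le> (x ^ 4) ^ 2" using True y0 by (intro power_mono) auto
        then have "y ^ 2 \<le> x ^ 8" by (simp add: power_mult[symmetric])
        then have "y ^ 2 * x ^ 2 \<le> x ^ 8 * x ^ 2" using x0 by (intro mult_right_mono) auto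
        also have "x ^ 8 * x ^ 2 = x ^ 10" by (simp add: power_add[symmetric])
        finally have "y ^ 2 * x ^ 2 \<le> x ^ 10" .
        moreover have "x powr (-10) = 1 / x ^ 10" using x0 by (simp add: powr_minus divide_inverse)
        ultimately show ?thesis using x0 y0 by (simp add: frac_le)
      qed
      show ?thesis using E1 E2 E3 unfolding x_def y_def by linarith
    next
      case False
      then have yx4: "x ^ 4 < y" by simp
      have x14: "x \<le> y powr (1/4)"
      proof -
        have e: "x ^ 4 = x powr 4" using x0 by simp
        have "(x ^ 4) powr (1/4) = x powr (4 * (1/4))" by (simp only: e powr_powr)
        then have "x = (x ^ 4) powr (1/4)" using x0 by simp
        also have "\<dots> \<le> y powr (1/4)" using yx4 x0 by (intro powr_mono2) auto
        finally show ?thesis .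
      qed
      have sy: "sqrt y \<le> Cp * ph" unfolding y_def ph_def using Cp(2) m by simp
      have sy': "sqrt y = y powr (1/2)" using y0 by (simp add: powr_half_sqrt)
      have base: "B^2 * x / ph \<le> M * Cp * y powr (- 1 / 4)"
      proof -
        have "B^2 * x / ph \<le> M * y powr (1/4) / ph"
          using MB x14 ph0 x0 M1 by (intro divide_right_mono mult_mono) auto
        also have "\<dots> \<le> M * y powr (1/4) / (sqrt y / Cp)"
        proof (rule divide_left_mono)
          show "sqrt y / Cp \<le> ph" using sy Cp(1) by (simp add: field_simps)
          show "0 \<le> M * y powr (1/4)" using M1 by simp
          show "0 < ph * (sqrt y / Cp)" using ph0 y0 Cp(1) by simp
        qed
        also have "\<dots> = M * Cp * (y powr (1/4) / y powr (1/2))" using Cp(1) sy' by (simp add: field_simps)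
        also have "y powr (1/4) / y powr (1/2) = y powr (- 1 / 4)" by (simp add: powr_diff[symmetric])
        finally show ?thesis .
      qed
      have Pw2: "Pw \<le> (M * Cp) powr t * y powr (- t / 4)"
      proof -
        have "Pw \<le> (M * Cp * y powr (- 1 / 4)) powr t"
          unfolding Pw_def using base t0pos x0 ph0 by (intro powr_mono2) auto
        also have "\<dots> = (M * Cp) powr t * y powr (- t / 4)" by (simp add: powr_mult powr_powr)
        finally show ?thesis .
      qed
      have MC: "(M * Cp) powr t \<le> y powr (t / 8)"
      proof -
        have "(M * Cp) powr t \<le> (sqrt x) powr t" using R5 M1 Cp(1) t0pos by (intro powr_mono2) auto
        also have "\<dots> = x powr (t / 2)" using x0 by (simp add: powr_half_sqrt[symmetric] powr_powr)
        also have "\<dots> \<le> (y powr (1/4)) powr (t / 2)" using x14 x0 t0pos by (intro powr_mono2) auto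
        also have "\<dots> = y powr (t / 8)" by (simp add: powr_powr)
        finally show ?thesis .
      qed
      have Lge: "1 \<le> L powr (t / 2)" using L1 t0pos by (intro ge_one_powr_ge_zero) auto
      have E1: "E_term B al be d m \<le> y powr (lam + A / 2 - t / 8)"
      proof -
        have "E_term B al be d m \<le> y powr lam * ((M * Cp) powr t * y powr (- t / 4)) * y powr (A / 2) * 1"
        proof -
          have "1 / L powr (t / 2) \<le> 1" using Lge by (simp add: divide_le_eq_1)
          then have "y powr lam * Pw * y powr (A / 2) * (1 / L powr (t / 2))
              \<le> y powr lam * ((M * Cp) powr t * y powr (- t / 4)) * y powr (A / 2) * 1"
            using Pw2 Pw0 by (intro mult_mono) auto
          then show ?thesis using core by linarith
        qed
        also have "\<dots> \<le> y powr lam * (y powr (t / 8) * y powr (- t / 4)) * y powr (A / 2) * 1"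
          using MC by (intro mult_mono mult_right_mono) auto
        also have "\<dots> = y powr (lam + A / 2 - t / 8)"
        proof -
          have "lam + A / 2 - t / 8 = lam + (t / 8 + - t / 4) + A / 2" by simp
          then show ?thesis by (simp only: powr_add mult_ac mult_1_right)
        qed
        finally show ?thesis .
      qed
      have E2: "y powr (lam + A / 2 - t / 8) \<le> y powr (- 5 / 2)"
        using R4 tt0 y1 by (intro powr_mono) auto
      have E3: "y powr (- 5 / 2) \<le> 1 / (y ^ 2 * x ^ 2)"
      proof -
        have x2: "x ^ 2 \<le> y powr (1/2)"
        proof -
          have "x ^ 2 \<le> (y powr (1/4)) ^ 2" using x14 x0 by (intro power_mono) auto
          also have "\<dots> = y powr (1/2)" by (simp add: power2_eq_square powr_add[symmetric])
          finally show ?thesis .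
        qed
        have p1: "y powr (5 / 2) = y powr (2 + 1 / 2)" by simp
        have p2: "y powr (2 + 1 / 2) = y powr 2 * y powr (1 / 2)" by (rule powr_add)
        have p3: "y powr 2 = y ^ 2" using y0 by (rule powr_numeral[OF less_imp_le])
        have p4: "y powr (- 5 / 2) = y powr (- (5 / 2))" by simp
        have p5: "y powr (- (5 / 2)) = inverse (y powr (5 / 2))" by (rule powr_minus)
        have "y powr (- 5 / 2) = 1 / (y ^ 2 * y powr (1/2))"
          unfolding p4 p5 p1 p2 p3 by (simp add: inverse_eq_divide)
        also have "\<dots> \<le> 1 / (y ^ 2 * x ^ 2)"
          using x2 x0 y0 by (intro divide_left_mono mult_left_mono) auto
        finally show ?thesis .
      qed
      show ?thesis using E1 E2 E3 unfolding x_def y_def by linarith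
    qed
  qed
  show ?thesis using main by blast
qed


lemma E_inf_real:
  assumes "summable (\<lambda>m. if m \<ge> 2 then E_term B al be d m else 0)"
  shows "E_inf B al be d = ennreal (\<Sum>m. if m \<ge> 2 then E_term B al be d m else 0)"
proof -
  have nn: "\<And>m. 0 \<le> (if m \<ge> 2 then E_term B al be d m else 0)" by (simp add: E_term_def)
  have "E_inf B al be d = (\<Sum>m. ennreal (if m \<ge> 2 then E_term B al be d m else 0))"
    unfolding E_inf_def by (intro suminf_cong) simp
  also have "\<dots> = ennreal (\<Sum>m. if m \<ge> 2 then E_term B al be d m else 0)"
    by (rule suminf_ennreal2[OF nn assms])
  finally show ?thesis .
qed

theorem proposition9p8:
  fixes B :: real and \<alpha> \<beta> :: "nat \<Rightarrow> real"
  assumes "B > 0"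
    and "bounded ((\<lambda>d. \<alpha> d * real (totient d)) ` {3..})"
    and "\<beta> \<longlonglongrightarrow> 0"
  shows "(\<Sum>d. if d \<ge> 3 \<and> real (totient d) * (1 - 2 * \<alpha> d) > 4
               then E_inf B (\<alpha> d) (\<beta> d) d else 0) < \<infinity>"
proof -
  obtain A0 where A0: "\<forall>x\<in>(\<lambda>d. \<alpha> d * real (totient d)) ` {3..}. norm x \<le> A0"
    using assms(2) unfolding bounded_iff by blast
  define A where "A = max A0 0"
  have Apos: "A \<ge> 0" unfolding A_def by simp
  have Abnd: "\<alpha> d * real (totient d) \<le> A" if "d \<ge> 3" for d
  proof -
    have "norm (\<alpha> d * real (totient d)) \<le> A0" using A0 that by auto
    then show ?thesis unfolding A_def by auto
  qed
  obtain D0 where D0: "\<And>d. d \<ge> D0 \<Longrightarrow> \<bar>\<beta> d\<bar> \<le> 1/4"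
  proof -
    obtain no where "\<forall>n\<ge>no. norm (\<beta> n - 0) < 1/4"
      using assms(3)[unfolded LIMSEQ_iff] by (metis divide_pos_pos zero_less_numeral zero_less_one)
    then show ?thesis using that by fastforce
  qed
  obtain D1 where D1: "\<forall>d\<ge>D1. \<forall>al be. al * real (totient d) \<le> A \<longrightarrow> \<bar>be\<bar> \<le> 1/4 \<longrightarrow>
           (\<forall>m\<ge>2. E_term B al be d m \<le> 1 / (real m ^ 2 * real d ^ 2))"
    using large_d[OF assms(1) Apos] by blast
  define N where "N = max (max D0 D1) 3"
  define h where "h = (\<lambda>d. if d \<ge> 3 \<and> real (totient d) * (1 - 2 * \<alpha> d) > 4
               then E_inf B (\<alpha> d) (\<beta> d) d else 0)"
  define S where "S = (\<Sum>m. inverse (real m ^ 2))"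
  have sumS: "summable (\<lambda>m. inverse (real m ^ 2))"
    using inverse_power_summable[of 2, where 'a=real] by simp
  have hfin: "h d < \<infinity>" if "d < N" for d
  proof (cases "d \<ge> 3 \<and> real (totient d) * (1 - 2 * \<alpha> d) > 4")
    case True
    then have "summable (\<lambda>m. if m \<ge> 2 then E_term B (\<alpha> d) (\<beta> d) d m else 0)"
      using small_d_bound[OF assms(1)] by blast
    then show ?thesis unfolding h_def using True E_inf_real by simp
  next
    case False then show ?thesis unfolding h_def using False by auto
  qed
  have hlarge: "h d \<le> ennreal (S * inverse (real d ^ 2))" if d: "d \<ge> N" for d
  proof (cases "d \<ge> 3 \<and> real (totient d) * (1 - 2 * \<alpha> d) > 4")
    case True
    have dD: "d \<ge> D0" "d \<ge> D1" "d \<ge> 3" using d unfolding N_def by auto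
    have bnd: "\<forall>m\<ge>2. E_term B (\<alpha> d) (\<beta> d) d m \<le> 1 / (real m ^ 2 * real d ^ 2)"
      using D1 dD Abnd[OF dD(3)] D0[OF dD(1)] by blast
    have "h d = (\<Sum>m. ennreal (if m \<ge> 2 then E_term B (\<alpha> d) (\<beta> d) d m else 0))"
      unfolding h_def E_inf_def using True by (simp add: if_distrib cong: if_cong)
    also have "\<dots> \<le> (\<Sum>m. ennreal (inverse (real m ^ 2) * inverse (real d ^ 2)))"
    proof (rule suminf_le)
      fix m
      show "ennreal (if m \<ge> 2 then E_term B (\<alpha> d) (\<beta> d) d m else 0)
            \<le> ennreal (inverse (real m ^ 2) * inverse (real d ^ 2))"
      proof (cases "m \<ge> 2")
        case True
        have e: "E_term B (\<alpha> d) (\<beta> d) d m \<le> inverse (real m ^ 2) * inverse (real d ^ 2)"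
          using bnd True by (simp add: divide_inverse inverse_mult_distrib)
        show ?thesis using True e by (intro ennreal_leI) simp
      next
        case False then show ?thesis by simp
      qed
    qed auto
    also have "\<dots> = ennreal (\<Sum>m. inverse (real m ^ 2) * inverse (real d ^ 2))"
      by (rule suminf_ennreal2) (auto intro: summable_mult2 sumS)
    also have "(\<Sum>m. inverse (real m ^ 2) * inverse (real d ^ 2)) = S * inverse (real d ^ 2)"
      unfolding S_def by (rule suminf_mult2[OF sumS, symmetric])
    finally show ?thesis .
  next
    case False then show ?thesis unfolding h_def using False by auto
  qed
  define k1 where "k1 = (\<lambda>d. if d < N then h d else 0)"
  define k2 where "k2 = (\<lambda>d. ennreal (S * inverse (real d ^ 2)))"
  have hk: "h d \<le> k1 d + k2 d" for d
  proof (cases "d < N")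
    case True then show ?thesis unfolding k1_def by (simp add: add_increasing2)
  next
    case False then show ?thesis unfolding k1_def k2_def using hlarge[of d] by simp
  qed
  have "suminf h \<le> (\<Sum>d. k1 d + k2 d)" by (rule suminf_le[OF hk]) auto
  also have "\<dots> = suminf k1 + suminf k2" by (rule suminf_add[symmetric]) auto
  also have "suminf k1 = (\<Sum>d\<in>{..<N}. k1 d)" by (rule suminf_finite) (auto simp: k1_def)
  also have "(\<Sum>d\<in>{..<N}. k1 d) < \<infinity>" using hfin by (simp add: k1_def)
  moreover have "suminf k2 < \<infinity>"
  proof -
    have S0: "S \<ge> 0" unfolding S_def using sumS by (intro suminf_nonneg) auto
    have "suminf k2 = ennreal (\<Sum>d. S * inverse (real d ^ 2))"
      unfolding k2_def using S0 by (intro suminf_ennreal2) (auto intro: summable_mult sumS)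
    then show ?thesis by simp
  qed
  ultimately have "suminf h < \<infinity>" by (simp add: order_le_less_trans)
  then show ?thesis unfolding h_def .
qed


end
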